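(* Let $G=GL_n(\mathbb C)$, $\mathfrak g=\mathfrak{gl}_n(\mathbb C)$, $V=\mathbb C^n$, $F\subset\mathcal D_{\mathfrak g}^G$ of (H-C)-type, and let $\mathcal N_{F,\mathfrak g}$ be the quotient of $\mathcal D_{\mathfrak g\times V}$ by the left ideal generated by $F$ and the vector fields $\tau_{\mathfrak g\times V}(Z)$, $Z\in\mathfrak g$. Identifying $T^*(\mathfrak g\times V)$ with $\mathfrak g\times V\times\mathfrak g\times V$ via the form $(A,B)\mapsto\mathrm{trace}(AB)$ on $\mathfrak g$ and the pairing $(u,v)\mapsto\langle u,\bar v\rangle$ on $V$, the characteristic variety of $\mathcal N_{F,\mathfrak g}$ is contained in $$\{(X,u,Y,v): Y\in\mathfrak N,\ [X,Y]=u\wedge\bar v\},$$ where $\mathfrak N$ is the nilpotent cone of $\mathfrak g$ and $u\wedge\bar v$ is the $n\times n$ matrix with $(i,j)$ entry $u_i\bar v_j$.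
   Context: $G$ acts on $\mathfrak g\times V$ by $g.(X,u)=(gXg^{-1},gu)$; $\tau_{\mathfrak g\times V}(Z)$ is the vector field whose value at $(X,u)$ is $([X,Z],Zu)$. $\mathcal D_{\mathfrak g}^G$: $G$-invariant differential operators on $\mathfrak g$; (H-C)-type: principal symbols contain a power of the ideal of $G$-invariant polynomials on $\mathfrak g^*$ vanishing at $0$. *)

theory Defs
  imports "HOL-Analysis.Analysis"
begin

text \<open>A polynomial differential operator on the affine space with coordinates indexed by the
finite type 'v is written in normal-ordered form
  P = sum over monomials m of  P m * x^(m o Inl) * d^(m o Inr),
i.e. by its finitely supported coefficient function on exponents of the variables
x_v (tag Inl v) and d_v (tag Inr v).  Points of the cotangent bundle in standard
coordinates are functions p :: 'v + 'v => complex, p (Inl v) = x_v, p (Inr v) = xi_v.\<close>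

type_synonym 'v diffop = "('v + 'v \<Rightarrow> nat) \<Rightarrow> complex"

definition supp_op :: "'v diffop \<Rightarrow> ('v + 'v \<Rightarrow> nat) set" where
  "supp_op P = {m. P m \<noteq> 0}"

definition is_diffop :: "'v diffop \<Rightarrow> bool" where
  "is_diffop P \<longleftrightarrow> finite (supp_op P)"

definition poly_eval :: "(('w::finite \<Rightarrow> nat) \<Rightarrow> complex) \<Rightarrow> ('w \<Rightarrow> complex) \<Rightarrow> complex" where
  "poly_eval c p = (\<Sum>m\<in>{m. c m \<noteq> 0}. c m * (\<Prod>w\<in>UNIV. p w ^ m w))"

definition polyfun :: "(('w::finite \<Rightarrow> complex) \<Rightarrow> complex) set" where
  "polyfun = {f. \<exists>c. finite {m. c m \<noteq> 0} \<and> f = poly_eval c}"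

definition full_sym :: "('v::finite) diffop \<Rightarrow> ('v + 'v \<Rightarrow> complex) \<Rightarrow> complex" where
  "full_sym P = poly_eval P"

text \<open>Product in the Weyl algebra:
  x^a d^b * x^c d^e = sum_k prod_v (b_v choose k_v) c_v!/(c_v-k_v)! x^(a+c-k) d^(b+e-k).\<close>
definition weyl_coeff :: "('v::finite + 'v \<Rightarrow> nat) \<Rightarrow> ('v + 'v \<Rightarrow> nat) \<Rightarrow> ('v \<Rightarrow> nat) \<Rightarrow> complex" where
  "weyl_coeff m1 m2 k = (\<Prod>v\<in>UNIV. of_nat ((m1 (Inr v) choose k v) *
      (fact (m2 (Inl v)) div fact (m2 (Inl v) - k v))))"

definition weyl_res :: "('v + 'v \<Rightarrow> nat) \<Rightarrow> ('v + 'v \<Rightarrow> nat) \<Rightarrow> ('v \<Rightarrow> nat) \<Rightarrow> ('v + 'v \<Rightarrow> nat)" where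
  "weyl_res m1 m2 k = (\<lambda>w. case w of Inl v \<Rightarrow> m1 (Inl v) + m2 (Inl v) - k v
                                   | Inr v \<Rightarrow> m1 (Inr v) + m2 (Inr v) - k v)"

definition weyl_mult :: "('v::finite) diffop \<Rightarrow> 'v diffop \<Rightarrow> 'v diffop" where
  "weyl_mult P Q = (\<lambda>m. \<Sum>m1\<in>supp_op P. \<Sum>m2\<in>supp_op Q.
      \<Sum>k\<in>{k. \<forall>v. k v \<le> m1 (Inr v) \<and> k v \<le> m2 (Inl v)}.
        (if m = weyl_res m1 m2 k then P m1 * Q m2 * weyl_coeff m1 m2 k else 0))"

definition left_ideal_gen :: "('v::finite) diffop set \<Rightarrow> 'v diffop set" where
  "left_ideal_gen S = {P. \<exists>(N::nat) a s. (\<forall>i<N. is_diffop (a i) \<and> s i \<in> S) \<and>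
      P = (\<lambda>m. \<Sum>i<N. weyl_mult (a i) (s i) m)}"

definition d_deg :: "('v::finite + 'v \<Rightarrow> nat) \<Rightarrow> nat" where
  "d_deg m = (\<Sum>v\<in>UNIV. m (Inr v))"

definition op_order :: "('v::finite) diffop \<Rightarrow> nat" where
  "op_order P = Max (d_deg ` supp_op P)"

definition prin_sym :: "('v::finite) diffop \<Rightarrow> ('v + 'v \<Rightarrow> complex) \<Rightarrow> complex" where
  "prin_sym P p = (\<Sum>m\<in>supp_op P. if d_deg m = op_order P
       then P m * (\<Prod>w\<in>UNIV. p w ^ m w) else 0)"

text \<open>Characteristic variety of the cyclic module D / I (I a left ideal): the common zero set
in the cotangent bundle of the principal symbols of the elements of I
(= support of gr(D/I) = gr D / gr I for the induced good filtration).\<close>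
definition char_var :: "('v::finite) diffop set \<Rightarrow> ('v + 'v \<Rightarrow> complex) set" where
  "char_var I = {p. \<forall>P\<in>I. prin_sym P p = 0}"

definition mat_bracket :: "complex^'n^'n \<Rightarrow> complex^'n^'n \<Rightarrow> complex^'n^'n" where
  "mat_bracket A B = A ** B - B ** A"

fun mat_pow :: "complex^'n^'n \<Rightarrow> nat \<Rightarrow> complex^'n^'n" where
  "mat_pow A 0 = mat 1"
| "mat_pow A (Suc k) = A ** mat_pow A k"

definition nilpotent_mat :: "complex^'n^'n \<Rightarrow> bool" where
  "nilpotent_mat Y \<longleftrightarrow> (\<exists>k. mat_pow Y k = 0)"

text \<open>Points of T*g, identified with g x g via trace(AB): the covector tr(. Y) has
coordinate xi_(i,j) = tr(E_ij Y) = Y_ji.\<close>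
definition pt_g :: "complex^'n^'n \<Rightarrow> complex^'n^'n \<Rightarrow> ('n \<times> 'n) + ('n \<times> 'n) \<Rightarrow> complex" where
  "pt_g X Y = (\<lambda>w. case w of Inl (i, j) \<Rightarrow> X $ i $ j | Inr (i, j) \<Rightarrow> Y $ j $ i)"

text \<open>Points of T*(g x V), identified with g x V x g x V via trace(AB) on g and the pairing
(u, v) |-> <u, conj v> = sum_i u_i conj(v_i) on V.\<close>
definition cot_pt :: "complex^'n^'n \<Rightarrow> complex^'n \<Rightarrow> complex^'n^'n \<Rightarrow> complex^'n \<Rightarrow>
    (('n \<times> 'n) + 'n) + (('n \<times> 'n) + 'n) \<Rightarrow> complex" where
  "cot_pt X u Y v = (\<lambda>w. case w of
       Inl (Inl (i, j)) \<Rightarrow> X $ i $ j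
     | Inl (Inr i) \<Rightarrow> u $ i
     | Inr (Inl (i, j)) \<Rightarrow> Y $ j $ i
     | Inr (Inr i) \<Rightarrow> cnj (v $ i))"

text \<open>G-invariant differential operators on g (G = GL_n acting by conjugation): invariance
of the operator under the linear automorphisms Ad g is invariance of its normal-ordered
full symbol under the cotangent lift (X, Y) |-> (g X g^-1, g Y g^-1).\<close>
definition G_invariant :: "('n::finite \<times> 'n) diffop \<Rightarrow> bool" where
  "G_invariant P \<longleftrightarrow> (\<forall>g X Y. invertible g \<longrightarrow>
      full_sym P (pt_g (g ** X ** matrix_inv g) (g ** Y ** matrix_inv g)) = full_sym P (pt_g X Y))"

definition inv_poly_plus :: "(complex^'n^'n \<Rightarrow> complex) set" where
  "inv_poly_plus = {q. (\<exists>f\<in>(polyfun :: (('n::finite \<times> 'n \<Rightarrow> complex) \<Rightarrow> complex) set).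
        q = (\<lambda>Y. f (\<lambda>(i, j). Y $ i $ j))) \<and> q 0 = 0 \<and>
      (\<forall>g Y. invertible g \<longrightarrow> q (g ** Y ** matrix_inv g) = q Y)}"

definition poly_ideal_gen :: "(('w::finite \<Rightarrow> complex) \<Rightarrow> complex) set \<Rightarrow> (('w \<Rightarrow> complex) \<Rightarrow> complex) set" where
  "poly_ideal_gen S = {f. \<exists>(N::nat) a s. (\<forall>i<N. a i \<in> polyfun \<and> s i \<in> S) \<and>
      f = (\<lambda>p. \<Sum>i<N. a i p * s i p)}"

definition Y_of :: "(('n \<times> 'n) + ('n \<times> 'n) \<Rightarrow> complex) \<Rightarrow> complex^'n^'n" where
  "Y_of p = (\<chi> i j. p (Inr (j, i)))"

text \<open>(H-C)-type: the ideal generated by the principal symbols of F contains a power of the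
ideal of C[g x g*] generated by the G-invariant polynomials on g* vanishing at 0, i.e. all
k-fold products of such polynomials.\<close>
definition HC_type :: "('n::finite \<times> 'n) diffop set \<Rightarrow> bool" where
  "HC_type F \<longleftrightarrow> (\<exists>k::nat. \<forall>qs. (\<forall>i<k. qs i \<in> inv_poly_plus) \<longrightarrow>
      (\<lambda>p. \<Prod>i<k. qs i (Y_of p)) \<in> poly_ideal_gen (prin_sym ` F))"

definition ext_g :: "('n \<times> 'n) diffop \<Rightarrow> (('n \<times> 'n) + 'n) diffop" where
  "ext_g P = (\<lambda>m. if (\<forall>i. m (Inl (Inr i)) = 0 \<and> m (Inr (Inr i)) = 0)
      then P (\<lambda>w. case w of Inl a \<Rightarrow> m (Inl (Inl a)) | Inr a \<Rightarrow> m (Inr (Inl a))) else 0)"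

definition mono_xd :: "'v \<Rightarrow> 'v \<Rightarrow> ('v + 'v \<Rightarrow> nat)" where
  "mono_xd a c = (\<lambda>w. (if w = Inl a then 1 else 0) + (if w = Inr c then 1 else 0))"

text \<open>Coefficient of x_a d_c in tau(Z) = sum_ij [X,Z]_ij d_(X_ij) + sum_i (Z u)_i d_(u_i).\<close>
definition tau_coeff :: "complex^'n^'n \<Rightarrow> ('n \<times> 'n) + 'n \<Rightarrow> ('n \<times> 'n) + 'n \<Rightarrow> complex" where
  "tau_coeff Z a c = (case (a, c) of
      (Inl (p, q), Inl (i, j)) \<Rightarrow> (if p = i then Z $ q $ j else 0) - (if q = j then Z $ i $ p else 0)
    | (Inr k, Inr i) \<Rightarrow> Z $ i $ k
    | _ \<Rightarrow> 0)"

definition tau :: "complex^'n^'n \<Rightarrow> (('n::finite \<times> 'n) + 'n) diffop" where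
  "tau Z = (\<lambda>m. \<Sum>a\<in>UNIV. \<Sum>c\<in>UNIV. if m = mono_xd a c then tau_coeff Z a c else 0)"

end

theory Submission
  imports Defs "Jordan_Normal_Form.Jordan_Normal_Form_Existence"
begin

no_notation Matrix.vec_index (infixl \<open>$\<close> 100)

section \<open>Polynomial functions\<close>

definition monom_ev :: "('w::finite \<Rightarrow> nat) \<Rightarrow> ('w \<Rightarrow> complex) \<Rightarrow> complex" where
  "monom_ev m p = (\<Prod>w\<in>UNIV. p w ^ m w)"

lemma poly_eval_superset:
  assumes "finite S" "{m. c m \<noteq> 0} \<subseteq> S"
  shows "poly_eval c p = (\<Sum>m\<in>S. c m * monom_ev m p)"
  unfolding poly_eval_def monom_ev_def
  by (rule sum.mono_neutral_left) (use assms in auto)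

lemma polyfun_sumI:
  assumes "finite I"
  shows "(\<lambda>p. \<Sum>i\<in>I. a i * monom_ev (e i) p) \<in> polyfun"
proof -
  define c where "c m = (\<Sum>i\<in>{i\<in>I. e i = m}. a i)" for m
  have sub: "{m. c m \<noteq> 0} \<subseteq> e ` I"
  proof
    fix m assume "m \<in> {m. c m \<noteq> 0}"
    then have "{i\<in>I. e i = m} \<noteq> {}" unfolding c_def by force
    then show "m \<in> e ` I" by auto
  qed
  have fin: "finite (e ` I)" using assms by simp
  have "poly_eval c p = (\<Sum>i\<in>I. a i * monom_ev (e i) p)" for p
  proof -
    have "poly_eval c p = (\<Sum>m\<in>e ` I. c m * monom_ev m p)"
      by (rule poly_eval_superset[OF fin sub])
    also have "\<dots> = (\<Sum>m\<in>e ` I. \<Sum>i\<in>{i\<in>I. e i = m}. a i * monom_ev (e i) p)"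
      unfolding c_def sum_distrib_right by (rule sum.cong) auto
    also have "\<dots> = (\<Sum>i\<in>I. a i * monom_ev (e i) p)"
      using sum.image_gen[OF assms, of "\<lambda>i. a i * monom_ev (e i) p" e] by simp
    finally show ?thesis .
  qed
  moreover have "finite {m. c m \<noteq> 0}" using sub fin finite_subset by blast
  ultimately show ?thesis unfolding polyfun_def by (intro CollectI exI[of _ c]) auto
qed

lemma polyfunE:
  assumes "f \<in> polyfun"
  obtains S c where "finite S" "\<And>p. f p = (\<Sum>m\<in>S. c m * monom_ev m p)"
  using assms unfolding polyfun_def poly_eval_def monom_ev_def by blast

lemma polyfun_const: "(\<lambda>p. k) \<in> polyfun"
proof -
  have "(\<lambda>p. \<Sum>i\<in>{()}. k * monom_ev (\<lambda>_. 0) p) \<in> polyfun" by (rule polyfun_sumI) auto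
  then show ?thesis by (simp add: monom_ev_def)
qed

lemma polyfun_var: "(\<lambda>p. p w0) \<in> polyfun"
proof -
  have "(\<lambda>p. \<Sum>i\<in>{()}. 1 * monom_ev (\<lambda>w. if w = w0 then 1 else 0) p) \<in> polyfun"
    by (rule polyfun_sumI) auto
  moreover have "monom_ev (\<lambda>w. if w = w0 then 1 else 0) p = p w0" for p
  proof -
    have "monom_ev (\<lambda>w. if w = w0 then 1 else 0) p = (\<Prod>w\<in>UNIV. if w = w0 then p w else 1)"
      unfolding monom_ev_def by (rule prod.cong) auto
    also have "\<dots> = p w0" by (simp add: prod.delta')
    finally show ?thesis .
  qed
  ultimately show ?thesis by simp
qed

lemma polyfun_add:
  assumes "f \<in> polyfun" "g \<in> polyfun"
  shows "(\<lambda>p. f p + g p) \<in> polyfun"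
proof -
  obtain S c where S: "finite S" "\<And>p. f p = (\<Sum>m\<in>S. c m * monom_ev m p)" using polyfunE[OF assms(1)] by blast
  obtain T d where T: "finite T" "\<And>p. g p = (\<Sum>m\<in>T. d m * monom_ev m p)" using polyfunE[OF assms(2)] by blast
  define c' where "c' m = (if m \<in> S then c m else 0)" for m
  define d' where "d' m = (if m \<in> T then d m else 0)" for m
  have "f p = (\<Sum>m\<in>S \<union> T. c' m * monom_ev m p)" for p
    unfolding S(2) c'_def by (rule sum.mono_neutral_cong_left) (use S T in auto)
  moreover have "g p = (\<Sum>m\<in>S \<union> T. d' m * monom_ev m p)" for p
    unfolding T(2) d'_def by (rule sum.mono_neutral_cong_left) (use S T in auto)
  ultimately have "(\<lambda>p. f p + g p) = (\<lambda>p. \<Sum>m\<in>S \<union> T. (c' m + d' m) * monom_ev (id m) p)"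
    by (auto simp: sum.distrib distrib_right)
  also have "\<dots> \<in> polyfun" by (rule polyfun_sumI) (use S T in auto)
  finally show ?thesis .
qed

lemma monom_ev_add: "monom_ev (\<lambda>w. m1 w + m2 w) p = monom_ev m1 p * monom_ev m2 p"
  unfolding monom_ev_def by (simp add: power_add prod.distrib)

lemma polyfun_mult:
  assumes "f \<in> polyfun" "g \<in> polyfun"
  shows "(\<lambda>p. f p * g p) \<in> polyfun"
proof -
  obtain S c where S: "finite S" "\<And>p. f p = (\<Sum>m\<in>S. c m * monom_ev m p)" using polyfunE[OF assms(1)] by blast
  obtain T d where T: "finite T" "\<And>p. g p = (\<Sum>m\<in>T. d m * monom_ev m p)" using polyfunE[OF assms(2)] by blast
  have "f p * g p = (\<Sum>x\<in>S \<times> T. (c (fst x) * d (snd x)) * monom_ev (\<lambda>w. fst x w + snd x w) p)" for p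
    unfolding S(2) T(2) sum_product sum.cartesian_product monom_ev_add
    by (rule sum.cong) (auto simp: algebra_simps)
  then have "(\<lambda>p. f p * g p) = (\<lambda>p. \<Sum>x\<in>S \<times> T. (c (fst x) * d (snd x)) * monom_ev (\<lambda>w. fst x w + snd x w) p)"
    by auto
  also have "\<dots> \<in> polyfun" by (rule polyfun_sumI) (use S T in auto)
  finally show ?thesis .
qed

lemma polyfun_diff:
  assumes "f \<in> polyfun" "g \<in> polyfun"
  shows "(\<lambda>p. f p - g p) \<in> polyfun"
proof -
  have "(\<lambda>p. (-1) * g p) \<in> polyfun" by (rule polyfun_mult[OF polyfun_const assms(2)])
  from polyfun_add[OF assms(1) this] show ?thesis by simp
qed

lemma polyfun_sum:
  assumes "finite A" "\<And>x. x \<in> A \<Longrightarrow> f x \<in> polyfun"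
  shows "(\<lambda>p. \<Sum>x\<in>A. f x p) \<in> polyfun"
  using assms
proof (induction A rule: finite_induct)
  case empty then show ?case using polyfun_const[of 0] by simp
next
  case (insert x F)
  then show ?case using polyfun_add[of "f x" "\<lambda>p. \<Sum>x\<in>F. f x p"] by simp
qed

lemma polyfun_prod:
  assumes "finite A" "\<And>x. x \<in> A \<Longrightarrow> f x \<in> polyfun"
  shows "(\<lambda>p. \<Prod>x\<in>A. f x p) \<in> polyfun"
  using assms
proof (induction A rule: finite_induct)
  case empty then show ?case using polyfun_const[of 1] by simp
next
  case (insert x F)
  then show ?case using polyfun_mult[of "f x" "\<lambda>p. \<Prod>x\<in>F. f x p"] by simp
qed


definition fr :: "nat \<Rightarrow> 'n::finite" where
  "fr = (SOME h. bij_betw h {0..<CARD('n)} UNIV)"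

lemma fr_bij: "bij_betw (fr :: nat \<Rightarrow> 'n::finite) {0..<CARD('n)} UNIV"
proof -
  have "\<exists>h::nat \<Rightarrow> 'n. bij_betw h {0..<CARD('n)} UNIV"
    using ex_bij_betw_nat_finite[of "UNIV :: 'n set"] by simp
  then show ?thesis unfolding fr_def by (rule someI_ex)
qed

lemma fr_inj: "i < CARD('n::finite) \<Longrightarrow> j < CARD('n) \<Longrightarrow> (fr i :: 'n) = fr j \<longleftrightarrow> i = j"
  using fr_bij[where 'n='n] unfolding bij_betw_def inj_on_def by auto

lemma fr_surj: "\<exists>i < CARD('n::finite). (fr i :: 'n) = a"
proof -
  have "a \<in> fr ` {0..<CARD('n)}" using fr_bij[where 'n='n] unfolding bij_betw_def by auto
  then show ?thesis by auto
qed

definition toM :: "complex^'n^'n \<Rightarrow> complex Matrix.mat" where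
  "toM Y = Matrix.mat CARD('n::finite) CARD('n) (\<lambda>(i,j). vec_nth (vec_nth Y (fr i)) (fr j))"

lemma toM_carrier[simp]: "toM (Y :: complex^'n^'n) \<in> carrier_mat CARD('n::finite) CARD('n)"
  and toM_dim[simp]: "dim_row (toM (Y :: complex^'n^'n)) = CARD('n)" "dim_col (toM (Y :: complex^'n^'n)) = CARD('n)"
  unfolding toM_def by auto

lemma toM_index[simp]: "i < CARD('n::finite) \<Longrightarrow> j < CARD('n) \<Longrightarrow>
   toM (Y :: complex^'n^'n) $$ (i,j) = vec_nth (vec_nth Y (fr i)) (fr j)"
  unfolding toM_def by auto

lemma toM_mult: "toM ((A :: complex^'n::finite^'n) ** B) = toM A * toM B"
proof (rule eq_matI)
  fix i j assume ij: "i < dim_row (toM A * toM B)" "j < dim_col (toM A * toM B)"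
  then have i: "i < CARD('n)" and j: "j < CARD('n)" by auto
  have "(toM A * toM B) $$ (i,j) = (\<Sum>l\<in>{0..<CARD('n)}. toM A $$ (i,l) * toM B $$ (l,j))"
    using i j by (simp add: scalar_prod_def)
  also have "\<dots> = (\<Sum>l\<in>{0..<CARD('n)}. vec_nth (vec_nth A (fr i)) (fr l) * vec_nth (vec_nth B (fr l)) (fr j))"
    using i j by (intro sum.cong) auto
  also have "\<dots> = (\<Sum>k\<in>UNIV. vec_nth (vec_nth A (fr i)) k * vec_nth (vec_nth B k) (fr j))"
    by (rule sum.reindex_bij_betw[OF fr_bij])
  also have "\<dots> = toM (A ** B) $$ (i,j)"
    using i j by (simp add: matrix_matrix_mult_def)
  finally show "toM (A ** B) $$ (i,j) = (toM A * toM B) $$ (i,j)" by simp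
qed auto

lemma toM_one: "toM (Finite_Cartesian_Product.mat 1 :: complex^'n::finite^'n) = 1\<^sub>m CARD('n)"
  by (rule eq_matI) (auto simp: Finite_Cartesian_Product.mat_def fr_inj)

lemma toM_zero: "toM (0 :: complex^'n::finite^'n) = 0\<^sub>m CARD('n) CARD('n)"
  by (rule eq_matI) auto

lemma toM_zero_iff: "toM (Y :: complex^'n::finite^'n) = 0\<^sub>m CARD('n) CARD('n) \<Longrightarrow> Y = 0"
proof -
  assume z: "toM Y = 0\<^sub>m CARD('n) CARD('n)"
  have "Y $ a $ b = 0" for a b
  proof -
    obtain i where i: "i < CARD('n)" "fr i = a" using fr_surj by blast
    obtain j where j: "j < CARD('n)" "fr j = b" using fr_surj by blast
    have "toM Y $$ (i,j) = 0" using z i j by simp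
    then show ?thesis using i j by simp
  qed
  then show "Y = 0" by (simp add: Finite_Cartesian_Product.vec_eq_iff)
qed

lemma mat_pow_Suc': "mat_pow Y (Suc k) = mat_pow Y k ** Y"
  by (induction k) (simp_all add: matrix_mul_assoc)

lemma toM_pow: "toM (mat_pow (Y :: complex^'n::finite^'n) k) = toM Y ^\<^sub>m k"
  by (induction k) (simp_all add: mat_pow_Suc' toM_mult toM_one del: mat_pow.simps(2))


section \<open>Invariant polynomials and nilpotency\<close>

definition qc :: "complex \<Rightarrow> complex^'n^'n \<Rightarrow> complex" where
  "qc c Y = poly (char_poly (toM Y)) c - c ^ CARD('n::finite)"

lemma qc_zero: "qc c (0 :: complex^'n::finite^'n) = 0"
proof -
  have "- char_matrix (toM (0 :: complex^'n^'n)) c = c \<cdot>\<^sub>m 1\<^sub>m CARD('n)"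
    by (rule eq_matI) (auto simp: char_matrix_def toM_zero)
  then have "poly (char_poly (toM (0 :: complex^'n^'n))) c = c ^ CARD('n)"
    using char_poly_matrix[OF toM_carrier[where Y = "0 :: complex^'n^'n"], of c] by simp
  then show ?thesis unfolding qc_def by simp
qed

lemma qc_inv:
  assumes "invertible (g :: complex^'n::finite^'n)"
  shows "qc c (g ** Y ** matrix_inv g) = qc c Y"
proof -
  have gi: "g ** matrix_inv g = Finite_Cartesian_Product.mat 1 \<and> matrix_inv g ** g = Finite_Cartesian_Product.mat 1"
    using assms unfolding invertible_def matrix_inv_def by (rule someI_ex)
  have "similar_mat (toM (g ** Y ** matrix_inv g)) (toM Y)"
    by (rule similar_matI[of _ _ "toM g" "toM (matrix_inv g)" "CARD('n)"])
      (use gi in \<open>auto simp: toM_mult[symmetric] toM_one\<close>)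
  then show ?thesis unfolding qc_def using char_poly_similar by metis
qed

lemma qc_poly:
  "\<exists>f\<in>(polyfun :: (('n::finite \<times> 'n \<Rightarrow> complex) \<Rightarrow> complex) set).
     qc c = (\<lambda>Y :: complex^'n^'n. f (\<lambda>(i, j). Y $ i $ j))"
proof -
  let ?N = "CARD('n)"
  let ?P = "{p. p permutes {0..<?N}}"
  define f :: "('n \<times> 'n \<Rightarrow> complex) \<Rightarrow> complex" where
    "f e = (\<Sum>p\<in>?P. signof p * (\<Prod>i=0..<?N. (if i = p i then c else 0) - e (fr i, fr (p i)))) - c ^ ?N" for e
  have "f \<in> polyfun"
  proof -
    have ent: "(\<lambda>e. (if i = p i then c else 0) - e (fr i, fr (p i))) \<in> polyfun" for i p
      by (rule polyfun_diff[OF polyfun_const polyfun_var])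
    have "(\<lambda>e. \<Prod>i=0..<?N. (if i = p i then c else 0) - e (fr i, fr (p i))) \<in> polyfun" for p
      by (rule polyfun_prod[of "{0..<?N}" "\<lambda>i e. (if i = p i then c else 0) - e (fr i, fr (p i))"])
        (simp_all only: finite_atLeastLessThan ent)
    then have "(\<lambda>e. signof p * (\<Prod>i=0..<?N. (if i = p i then c else 0) - e (fr i, fr (p i)))) \<in> polyfun" for p
      by (rule polyfun_mult[OF polyfun_const])
    then have "(\<lambda>e. \<Sum>p\<in>?P. signof p * (\<Prod>i=0..<?N. (if i = p i then c else 0) - e (fr i, fr (p i)))) \<in> polyfun"
      by (intro polyfun_sum) (auto simp: finite_permutations)
    then show ?thesis unfolding f_def by (rule polyfun_diff[OF _ polyfun_const])
  qed
  moreover have "qc c Y = f (\<lambda>(i, j). Y $ i $ j)" for Y :: "complex^'n^'n"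
  proof -
    have car: "- char_matrix (toM Y) c \<in> carrier_mat ?N ?N" by (simp add: char_matrix_def)
    have "qc c Y = det (- char_matrix (toM Y) c) - c ^ ?N"
      unfolding qc_def char_poly_matrix[OF toM_carrier] ..
    also have "det (- char_matrix (toM Y) c) = (\<Sum>p\<in>?P. signof p * (\<Prod>i=0..<?N. (- char_matrix (toM Y) c) $$ (i, p i)))"
      by (rule det_def'[OF car])
    also have "\<dots> = (\<Sum>p\<in>?P. signof p * (\<Prod>i=0..<?N. (if i = p i then c else 0) - Y $ fr i $ fr (p i)))"
    proof (rule sum.cong[OF refl], rule arg_cong[where f = "(*) _"], rule prod.cong[OF refl])
      fix p i assume p: "p \<in> ?P" and i: "i \<in> {0..<?N}"
      have "p i < ?N" using p i permutes_in_image[of p "{0..<?N}" i] by auto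
      then show "(- char_matrix (toM Y) c) $$ (i, p i) = (if i = p i then c else 0) - Y $ fr i $ fr (p i)"
        using i by (auto simp: char_matrix_def)
    qed
    finally show ?thesis unfolding f_def by simp
  qed
  ultimately show ?thesis by blast
qed

lemma qc_mem: "qc c \<in> (inv_poly_plus :: (complex^'n::finite^'n \<Rightarrow> complex) set)"
  unfolding inv_poly_plus_def using qc_poly[of c] qc_zero[of c] qc_inv[of _ c] by blast

lemma poly_prod_list_map: "poly (prod_list (map g xs)) x = prod_list (map (\<lambda>y. poly (g y) x) xs)"
  by (induction xs) auto

lemma nilp_from_inv:
  assumes "\<forall>q\<in>(inv_poly_plus :: (complex^'n::finite^'n \<Rightarrow> complex) set). q Y = 0"
  shows "nilpotent_mat Y"
proof -
  let ?N = "CARD('n)"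
  define A where "A = toM Y"
  have A: "A \<in> carrier_mat ?N ?N" unfolding A_def by simp
  have pc: "poly (char_poly A) c = c ^ ?N" for c
    using assms qc_mem[of c] unfolding qc_def A_def by auto
  have "poly (char_poly A) = poly ([:0,1:] ^ ?N)"
    by (rule ext) (simp add: pc)
  then have "char_poly A = [:0,1:] ^ ?N" by (simp add: poly_eq_poly_eq_iff)
  then have "char_poly A = (\<Prod>a\<leftarrow>replicate ?N 0. [:- a, 1:])" by (simp add: prod_list_replicate)
  from jordan_nf_exists[OF A this] obtain n_as where jnf: "jordan_nf A n_as" by blast
  from jordan_nf_powE[OF A jnf] obtain P Q where PQ: "P \<in> carrier_mat ?N ?N" "Q \<in> carrier_mat ?N ?N"
    "char_poly A = (\<Prod>(na, a)\<leftarrow>n_as. [:- a, 1:] ^ na)"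
    "\<And>k. A ^\<^sub>m k = P * jordan_matrix n_as ^\<^sub>m k * Q" by blast
  have a0: "a = 0" if na: "(na, a) \<in> set n_as" for na a
  proof -
    have "na \<noteq> 0" using jnf na unfolding jordan_nf_def by force
    have gen: "poly (\<Prod>(na, b)\<leftarrow>xs. [:- b, 1:] ^ na) a = (\<Prod>(na, b)\<leftarrow>xs. (a - b) ^ na)" for xs
      by (induction xs) (auto simp: poly_power)
    have "poly (char_poly A) a = (\<Prod>(na, b)\<leftarrow>n_as. (a - b) ^ na)"
      unfolding PQ(3) gen ..
    also have "\<dots> = 0"
      unfolding prod_list_zero_iff using na \<open>na \<noteq> 0\<close> by force
    finally have "a ^ ?N = 0" using pc by simp
    then show ?thesis by simp
  qed
  define K where "K = sum_list (map fst n_as)"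
  have JK: "jordan_matrix n_as \<in> carrier_mat K K" unfolding K_def by simp
  from jnf have "similar_mat A (jordan_matrix n_as)" unfolding jordan_nf_def by simp
  from similar_matD[OF this] obtain n' where "A \<in> carrier_mat n' n'" "jordan_matrix n_as \<in> carrier_mat n' n'" by blast
  then have "K = n'" "?N = n'" using A JK by (auto dest!: carrier_matD(1))
  then have KN: "K = ?N" by simp
  have blk: "jordan_block na a ^\<^sub>m K = 0\<^sub>m na na" if na: "(na, a) \<in> set n_as" for na a
  proof -
    have "na \<in> set (map fst n_as)" using na by force
    then have "na \<le> K" unfolding K_def by (rule member_le_sum_list) auto
    then show ?thesis unfolding a0[OF na] jordan_block_zero_pow by (intro eq_matI) auto
  qed
  have "elements_mat (jordan_matrix n_as ^\<^sub>m K) \<subseteq> {0}"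
  proof -
    have "elements_mat (jordan_matrix n_as ^\<^sub>m K) \<subseteq>
        {0} \<union> \<Union> (set (map elements_mat (map (\<lambda>(n,a). jordan_block n a ^\<^sub>m K) n_as)))"
      unfolding jordan_matrix_pow by (rule elements_diag_block_mat)
    also have "\<dots> \<subseteq> {0}"
    proof -
      have "elements_mat (jordan_block n a ^\<^sub>m K) \<subseteq> {0}" if "(n, a) \<in> set n_as" for n a
        using blk[OF that] by (auto dest!: elements_matD)
      then show ?thesis by auto
    qed
    finally show ?thesis .
  qed
  note el = this
  have JKc: "jordan_matrix n_as ^\<^sub>m K \<in> carrier_mat K K" using JK by (rule pow_carrier_mat)
  have JK0: "jordan_matrix n_as ^\<^sub>m K = 0\<^sub>m K K"
  proof (rule eq_matI)
    fix i j assume "i < dim_row (0\<^sub>m K K)" "j < dim_col (0\<^sub>m K K)"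
    then have ij: "i < K" "j < K" by auto
    have "(jordan_matrix n_as ^\<^sub>m K) $$ (i,j) \<in> elements_mat (jordan_matrix n_as ^\<^sub>m K)"
      by (rule elements_matI[OF JKc ij refl])
    then show "(jordan_matrix n_as ^\<^sub>m K) $$ (i,j) = 0\<^sub>m K K $$ (i,j)" using el ij by auto
  qed (simp_all only: carrier_matD[OF JKc] index_zero_mat)
  have "A ^\<^sub>m K = P * 0\<^sub>m K K * Q" using PQ(4) JK0 by simp
  also have "\<dots> = 0\<^sub>m ?N ?N" unfolding KN using PQ(1,2) by (simp add: right_mult_zero_mat left_mult_zero_mat)
  finally have "A ^\<^sub>m K = 0\<^sub>m ?N ?N" .
  then have "toM (mat_pow Y K) = 0\<^sub>m ?N ?N" unfolding A_def toM_pow .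
  then have "mat_pow Y K = 0" by (rule toM_zero_iff)
  then show ?thesis unfolding nilpotent_mat_def by blast
qed


section \<open>Weyl algebra facts\<close>

definition uop :: "('v::finite) diffop" where
  "uop = (\<lambda>m. if m = (\<lambda>_. 0) then 1 else 0)"

lemma supp_uop: "supp_op uop = {\<lambda>_. 0}"
  unfolding supp_op_def uop_def by auto

lemma is_diffop_uop: "is_diffop uop"
  unfolding is_diffop_def supp_uop by simp

lemma weyl_mult_uop:
  assumes "is_diffop (Q :: ('v::finite) diffop)"
  shows "weyl_mult uop Q = Q"
proof
  fix m
  have K: "{k. \<forall>v. k v = (0::nat) \<and> k v \<le> m2 (Inl v)} = {\<lambda>_. 0}" for m2 :: "'v + 'v \<Rightarrow> nat"
    by auto
  have K2: "{k. \<forall>v. k v \<le> (0::nat) \<and> k v \<le> m2 (Inl v)} = {\<lambda>_. 0}" for m2 :: "'v + 'v \<Rightarrow> nat"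
    by auto
  have R: "weyl_res (\<lambda>_. 0) m2 (\<lambda>_. 0) = m2" for m2 :: "'v + 'v \<Rightarrow> nat"
    unfolding weyl_res_def by (rule ext) (auto split: sum.splits)
  have C: "weyl_coeff (\<lambda>_. 0) m2 (\<lambda>_. 0) = 1" for m2 :: "'v + 'v \<Rightarrow> nat"
    unfolding weyl_coeff_def by simp
  have "weyl_mult uop Q m = (\<Sum>m2\<in>supp_op Q. \<Sum>k\<in>{k. \<forall>v. k v \<le> 0 \<and> k v \<le> m2 (Inl v)}.
       if m = weyl_res (\<lambda>_. 0) m2 k then (uop :: 'v diffop) (\<lambda>_. 0) * Q m2 * weyl_coeff (\<lambda>_. 0) m2 k else 0)"
    unfolding weyl_mult_def supp_uop by simp
  also have "\<dots> = (\<Sum>m2\<in>supp_op Q. if m = m2 then Q m2 else 0)"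
  proof (rule sum.cong[OF refl])
    fix m2 :: "'v + 'v \<Rightarrow> nat"
    have "{k. \<forall>v. k v \<le> 0 \<and> k v \<le> m2 (Inl v)} = {\<lambda>_. 0}" by auto
    then show "(\<Sum>k\<in>{k. \<forall>v. k v \<le> 0 \<and> k v \<le> m2 (Inl v)}.
       if m = weyl_res (\<lambda>_. 0) m2 k then (uop :: 'v diffop) (\<lambda>_. 0) * Q m2 * weyl_coeff (\<lambda>_. 0) m2 k else 0) =
       (if m = m2 then Q m2 else 0)"
      by (simp add: R C uop_def)
  qed
  also have "\<dots> = Q m"
    using assms unfolding is_diffop_def by (simp add: sum.delta supp_op_def)
  finally show "weyl_mult uop Q m = Q m" .
qed

lemma gen_in_ideal:
  assumes "s \<in> S" "is_diffop s"
  shows "s \<in> left_ideal_gen S"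
proof -
  have "s = (\<lambda>m. \<Sum>i<(1::nat). weyl_mult ((\<lambda>_. uop) i) ((\<lambda>_. s) i) m)"
    using weyl_mult_uop[OF assms(2)] by simp
  then show ?thesis unfolding left_ideal_gen_def using assms is_diffop_uop
    by (intro CollectI exI[of _ "1::nat"] exI[of _ "\<lambda>_. uop"] exI[of _ "\<lambda>_. s"]) auto
qed

lemma char_var_gen:
  assumes "p \<in> char_var (left_ideal_gen S)" "s \<in> S" "is_diffop s"
  shows "prin_sym s p = 0"
  using assms gen_in_ideal unfolding char_var_def by blast

lemma prin_sym_const_deg:
  assumes "\<And>m. m \<in> supp_op P \<Longrightarrow> d_deg m = d"
  shows "prin_sym P p = (\<Sum>m\<in>supp_op P. P m * monom_ev m p)"
  unfolding prin_sym_def monom_ev_def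
proof (rule sum.cong[OF refl])
  fix m assume m: "m \<in> supp_op P"
  then have "d_deg ` supp_op P = {d}" using assms by auto
  then have "op_order P = d" unfolding op_order_def by simp
  then show "(if d_deg m = op_order P then P m * (\<Prod>w\<in>UNIV. p w ^ m w) else 0) = P m * (\<Prod>w\<in>UNIV. p w ^ m w)"
    using assms[OF m] by simp
qed

lemma monom_delta: "monom_ev (\<lambda>w. if w = w0 then 1 else 0) p = p w0"
proof -
  have "monom_ev (\<lambda>w. if w = w0 then 1 else 0) p = (\<Prod>w\<in>UNIV. if w = w0 then p w else 1)"
    unfolding monom_ev_def by (rule prod.cong) auto
  also have "\<dots> = p w0" by (simp add: prod.delta')
  finally show ?thesis .
qed

lemma sum_UNIV_plus: "(\<Sum>x\<in>(UNIV::('a::finite + 'b::finite) set). g x) = (\<Sum>a\<in>UNIV. g (Inl a)) + (\<Sum>b\<in>UNIV. g (Inr b))"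
  by (subst UNIV_Plus_UNIV[symmetric], subst sum.Plus) auto

lemma prod_UNIV_plus: "(\<Prod>x\<in>(UNIV::('a::finite + 'b::finite) set). g x) = (\<Prod>a\<in>UNIV. g (Inl a)) * (\<Prod>b\<in>UNIV. g (Inr b))"
  by (subst UNIV_Plus_UNIV[symmetric], subst prod.Plus) auto

definition emb :: "(('n \<times> 'n) + ('n \<times> 'n) \<Rightarrow> nat) \<Rightarrow> (('n \<times> 'n) + 'n) + (('n \<times> 'n) + 'n) \<Rightarrow> nat" where
  "emb m = (\<lambda>w. case w of Inl (Inl a) \<Rightarrow> m (Inl a) | Inr (Inl a) \<Rightarrow> m (Inr a) | _ \<Rightarrow> 0)"

lemma inj_emb: "inj emb"
proof (rule injI)
  fix m1 m2 :: "('n \<times> 'n) + ('n \<times> 'n) \<Rightarrow> nat"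
  assume e: "emb m1 = emb m2"
  show "m1 = m2"
  proof
    fix w show "m1 w = m2 w"
    proof (cases w)
      case (Inl a) then show ?thesis using fun_cong[OF e, of "Inl (Inl a)"] by (simp add: emb_def)
    next
      case (Inr a) then show ?thesis using fun_cong[OF e, of "Inr (Inl a)"] by (simp add: emb_def)
    qed
  qed
qed

lemma ext_g_emb: "ext_g P (emb m) = P m"
proof -
  have "(\<lambda>w. case w of Inl a \<Rightarrow> emb m (Inl (Inl a)) | Inr a \<Rightarrow> emb m (Inr (Inl a))) = m"
    by (rule ext) (auto simp: emb_def split: sum.splits)
  moreover have "case_sum (\<lambda>a. m (Inl a)) (\<lambda>a. m (Inr a)) = m"
    by (rule ext) (simp split: sum.split)
  ultimately show ?thesis unfolding ext_g_def by (simp add: emb_def)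
qed

lemma ext_g_not_emb: "m' \<notin> range emb \<Longrightarrow> ext_g P m' = 0"
proof -
  assume nm: "m' \<notin> range emb"
  have "\<not> (\<forall>i. m' (Inl (Inr i)) = 0 \<and> m' (Inr (Inr i)) = 0)"
  proof
    assume z: "\<forall>i. m' (Inl (Inr i)) = 0 \<and> m' (Inr (Inr i)) = 0"
    have "m' = emb (\<lambda>w. case w of Inl a \<Rightarrow> m' (Inl (Inl a)) | Inr a \<Rightarrow> m' (Inr (Inl a)))"
      by (rule ext) (use z in \<open>auto simp: emb_def split: sum.splits\<close>)
    with nm show False by blast
  qed
  then show ?thesis unfolding ext_g_def by auto
qed

lemma supp_ext_g: "supp_op (ext_g P) = emb ` supp_op P"
proof
  show "supp_op (ext_g P) \<subseteq> emb ` supp_op P"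
  proof
    fix m' assume m': "m' \<in> supp_op (ext_g P)"
    then have "m' \<in> range emb" using ext_g_not_emb unfolding supp_op_def by force
    then obtain m where "m' = emb m" by blast
    then show "m' \<in> emb ` supp_op P" using m' by (auto simp: supp_op_def ext_g_emb)
  qed
qed (auto simp: supp_op_def ext_g_emb)

lemma is_diffop_ext_g: "is_diffop P \<Longrightarrow> is_diffop (ext_g P)"
  unfolding is_diffop_def supp_ext_g by simp

lemma d_deg_emb: "d_deg (emb m) = d_deg m"
  unfolding d_deg_def by (simp add: sum_UNIV_plus emb_def)

lemma monom_emb: "monom_ev (emb m) (cot_pt X u Y v) = monom_ev m (pt_g X Y)"
proof -
  have 1: "cot_pt X u Y v (Inl (Inl a)) = pt_g X Y (Inl a)" for a
    by (cases a) (simp add: cot_pt_def pt_g_def)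
  have 2: "cot_pt X u Y v (Inr (Inl a)) = pt_g X Y (Inr a)" for a
    by (cases a) (simp add: cot_pt_def pt_g_def)
  show ?thesis unfolding monom_ev_def
    by (simp add: prod_UNIV_plus emb_def 1 2)
qed

lemma prin_sym_ext_g:
  "prin_sym (ext_g P) (cot_pt X u Y v) = prin_sym P (pt_g X Y)"
proof -
  have oo: "op_order (ext_g P) = op_order P"
    unfolding op_order_def supp_ext_g image_image d_deg_emb ..
  have "prin_sym (ext_g P) (cot_pt X u Y v) =
     (\<Sum>m'\<in>emb ` supp_op P. if d_deg m' = op_order (ext_g P) then ext_g P m' * monom_ev m' (cot_pt X u Y v) else 0)"
    unfolding prin_sym_def supp_ext_g monom_ev_def ..
  also have "\<dots> = (\<Sum>m\<in>supp_op P. if d_deg (emb m) = op_order (ext_g P) then ext_g P (emb m) * monom_ev (emb m) (cot_pt X u Y v) else 0)"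
    by (simp add: sum.reindex[OF inj_on_subset[OF inj_emb subset_UNIV]] comp_def)
  also have "\<dots> = prin_sym P (pt_g X Y)"
    unfolding prin_sym_def oo d_deg_emb ext_g_emb monom_emb unfolding monom_ev_def by (rule refl)
  finally show ?thesis .
qed


section \<open>The vector fields tau\<close>

lemma mono_xd_eq_iff: "mono_xd a c = mono_xd a' c' \<longleftrightarrow> a' = a \<and> c' = c"
proof
  assume e: "mono_xd a c = mono_xd a' c'"
  from fun_cong[OF e, of "Inl a"] have "a' = a" by (auto simp: mono_xd_def split: if_splits)
  moreover from fun_cong[OF e, of "Inr c"] have "c' = c" by (auto simp: mono_xd_def split: if_splits)
  ultimately show "a' = a \<and> c' = c" ..
qed auto

lemma sum_delta2: "(\<Sum>a'\<in>(UNIV :: 'a::finite set). \<Sum>c'\<in>(UNIV :: 'b::finite set). if a' = a \<and> c' = c then g a' c' else 0) = g a c"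
proof -
  have "(\<Sum>a'\<in>(UNIV :: 'a set). \<Sum>c'\<in>(UNIV :: 'b set). if a' = a \<and> c' = c then g a' c' else 0)
      = (\<Sum>a'\<in>(UNIV :: 'a set). if a' = a then (\<Sum>c'\<in>(UNIV :: 'b set). if c' = c then g a' c' else 0) else 0)"
    by (rule sum.cong) auto
  also have "\<dots> = g a c" by (simp add: sum.delta')
  finally show ?thesis .
qed

lemma tau_at: "tau Z (mono_xd a c) = tau_coeff Z a c"
  unfolding tau_def mono_xd_eq_iff by (rule sum_delta2)

lemma tau_not: "m \<notin> range (\<lambda>(a, c). mono_xd a c) \<Longrightarrow> tau Z m = 0"
  unfolding tau_def by (rule sum.neutral, rule ballI, rule sum.neutral) auto

lemma supp_tau: "supp_op (tau Z) \<subseteq> range (\<lambda>(a, c). mono_xd a c)"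
  unfolding supp_op_def using tau_not by blast

lemma is_diffop_tau: "is_diffop (tau (Z :: complex^'n::finite^'n))"
  unfolding is_diffop_def by (rule finite_subset[OF supp_tau]) simp

lemma d_deg_mono_xd: "d_deg (mono_xd (a :: 'v::finite) c) = 1"
  unfolding d_deg_def mono_xd_def by (simp add: sum.delta')

lemma monom_mono_xd: "monom_ev (mono_xd a c) p = p (Inl a) * p (Inr c)"
proof -
  have "mono_xd a c = (\<lambda>w. (\<lambda>w. if w = Inl a then 1 else 0) w + (\<lambda>w. if w = Inr c then 1 else 0) w)"
    unfolding mono_xd_def ..
  then show ?thesis by (simp only: monom_ev_add monom_delta)
qed

lemma inj_mono_xd: "inj (\<lambda>(a, c). mono_xd a c)"
  by (rule injI) (auto simp: mono_xd_eq_iff)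

lemma sum_UNIV_pair: "(\<Sum>x\<in>(UNIV :: ('a::finite \<times> 'b::finite) set). g x) = (\<Sum>a\<in>UNIV. \<Sum>b\<in>UNIV. g (a, b))"
  by (subst UNIV_Times_UNIV[symmetric], subst sum.cartesian_product) simp

lemma prin_sym_tau:
  "prin_sym (tau (Z :: complex^'n::finite^'n)) p = (\<Sum>a\<in>UNIV. \<Sum>c\<in>UNIV. tau_coeff Z a c * (p (Inl a) * p (Inr c)))"
proof -
  let ?R = "range (\<lambda>(a, c). mono_xd a c) :: ((('n \<times> 'n) + 'n) + (('n \<times> 'n) + 'n) \<Rightarrow> nat) set"
  have "prin_sym (tau Z) p = (\<Sum>m\<in>supp_op (tau Z). tau Z m * monom_ev m p)"
  proof (rule prin_sym_const_deg)
    fix m assume "m \<in> supp_op (tau Z)"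
    then have "m \<in> range (\<lambda>(a, c). mono_xd a c)" using supp_tau by blast
    then obtain x where "m = (case x of (a, c) \<Rightarrow> mono_xd a c)" by blast
    then show "d_deg m = 1" by (cases x) (simp add: d_deg_mono_xd)
  qed
  also have "\<dots> = (\<Sum>m\<in>?R. tau Z m * monom_ev m p)"
    by (rule sum.mono_neutral_left) (use supp_tau in \<open>auto simp: supp_op_def\<close>)
  also have "\<dots> = (\<Sum>x\<in>UNIV. tau Z (case x of (a, c) \<Rightarrow> mono_xd a c) * monom_ev (case x of (a, c) \<Rightarrow> mono_xd a c) p)"
    by (subst sum.reindex[OF inj_mono_xd]) (simp add: comp_def)
  also have "\<dots> = (\<Sum>a\<in>UNIV. \<Sum>c\<in>UNIV. tau_coeff Z a c * (p (Inl a) * p (Inr c)))"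
    by (simp add: sum_UNIV_pair tau_at monom_mono_xd)
  finally show ?thesis .
qed

lemma L1: "(\<Sum>i\<in>(UNIV::'a::finite set). \<Sum>j\<in>(UNIV::'b::finite set). if p = i then g i j else (0::complex)) = (\<Sum>j\<in>UNIV. g p j)"
proof -
  have "(\<Sum>j\<in>(UNIV::'b set). if p = i then g i j else 0) = (if p = i then (\<Sum>j\<in>UNIV. g i j) else 0)" for i
    by (cases "p = i") auto
  then show ?thesis by (simp add: sum.delta)
qed

lemma L5: "(\<Sum>i\<in>(UNIV::'a::finite set). \<Sum>j\<in>(UNIV::'b::finite set). if i = p then g i j else (0::complex)) = (\<Sum>j\<in>UNIV. g p j)"
proof -
  have "(\<Sum>j\<in>(UNIV::'b set). if i = p then g i j else 0) = (if i = p then (\<Sum>j\<in>UNIV. g i j) else 0)" for i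
    by (cases "i = p") auto
  then show ?thesis by (simp add: sum.delta')
qed

lemma L2: "(\<Sum>i\<in>(UNIV::'a::finite set). \<Sum>j\<in>(UNIV::'b::finite set). if q = j then g i j else (0::complex)) = (\<Sum>i\<in>UNIV. g i q)"
  by (simp add: sum.delta)

lemma L3: "(\<Sum>j\<in>(UNIV::'a::finite set). if P \<and> j = b then t j else (0::complex)) = (if P then t b else 0)"
  by (cases P) (simp_all add: sum.delta')

lemma L4: "(\<Sum>j\<in>(UNIV::'a::finite set). if j = b \<and> P then t j else (0::complex)) = (if P then t b else 0)"
  by (cases P) (simp_all add: sum.delta')

lemma ifdiff: "((if P then a else 0) - (if Q then b else 0)) * (t::complex) = (if P then a * t else 0) - (if Q then b * t else 0)"
  by (auto simp: algebra_simps)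

lemma tau_split:
  fixes X Y :: "complex^'n::finite^'n" and u v :: "complex^'n"
  shows "(\<Sum>a\<in>UNIV. \<Sum>c\<in>UNIV. tau_coeff Z a c * (cot_pt X u Y v (Inl a) * cot_pt X u Y v (Inr c)))
   = (\<Sum>p\<in>UNIV. \<Sum>q\<in>UNIV. \<Sum>i\<in>UNIV. \<Sum>j\<in>UNIV. ((if p = i then Z $ q $ j else 0) - (if q = j then Z $ i $ p else 0)) * (X $ p $ q * Y $ j $ i))
     + (\<Sum>k\<in>UNIV. \<Sum>i\<in>UNIV. Z $ i $ k * (u $ k * cnj (v $ i)))"
  by (simp add: sum_UNIV_plus sum_UNIV_pair tau_coeff_def cot_pt_def)

lemma gl_part:
  fixes X Y Z :: "complex^'n::finite^'n"
  shows "(\<Sum>p\<in>UNIV. \<Sum>q\<in>UNIV. \<Sum>i\<in>UNIV. \<Sum>j\<in>UNIV. ((if p = i then Z $ q $ j else 0) - (if q = j then Z $ i $ p else 0)) * (X $ p $ q * Y $ j $ i))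
    = (\<Sum>p\<in>UNIV. \<Sum>q\<in>UNIV. (\<Sum>j\<in>UNIV. Z $ q $ j * (X $ p $ q * Y $ j $ p)) - (\<Sum>i\<in>UNIV. Z $ i $ p * (X $ p $ q * Y $ q $ i)))"
proof (rule sum.cong[OF refl], rule sum.cong[OF refl])
  fix p q :: 'n
  have "(\<Sum>i\<in>UNIV. \<Sum>j\<in>UNIV. ((if p = i then Z $ q $ j else 0) - (if q = j then Z $ i $ p else 0)) * (X $ p $ q * Y $ j $ i))
     = (\<Sum>i\<in>UNIV. \<Sum>j\<in>UNIV. if p = i then Z $ q $ j * (X $ p $ q * Y $ j $ i) else 0)
       - (\<Sum>i\<in>UNIV. \<Sum>j\<in>UNIV. if q = j then Z $ i $ p * (X $ p $ q * Y $ j $ i) else 0)"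
    unfolding ifdiff sum_subtractf ..
  also have "\<dots> = (\<Sum>j\<in>UNIV. Z $ q $ j * (X $ p $ q * Y $ j $ p)) - (\<Sum>i\<in>UNIV. Z $ i $ p * (X $ p $ q * Y $ q $ i))"
    unfolding L1 L2 ..
  finally show "(\<Sum>i\<in>UNIV. \<Sum>j\<in>UNIV. ((if p = i then Z $ q $ j else 0) - (if q = j then Z $ i $ p else 0)) * (X $ p $ q * Y $ j $ i))
     = (\<Sum>j\<in>UNIV. Z $ q $ j * (X $ p $ q * Y $ j $ p)) - (\<Sum>i\<in>UNIV. Z $ i $ p * (X $ p $ q * Y $ q $ i))" .
qed

lemma tau_sum_E:
  fixes X Y :: "complex^'n::finite^'n" and u v :: "complex^'n" and \<alpha> \<beta> :: 'n
  defines "E \<equiv> (\<chi> r s. if r = \<alpha> \<and> s = \<beta> then 1 else 0) :: complex^'n^'n"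
  shows "(\<Sum>a\<in>UNIV. \<Sum>c\<in>UNIV. tau_coeff E a c * (cot_pt X u Y v (Inl a) * cot_pt X u Y v (Inr c)))
       = (Y ** X) $ \<beta> $ \<alpha> - (X ** Y) $ \<beta> $ \<alpha> + u $ \<beta> * cnj (v $ \<alpha>)"
proof -
  have E: "E $ r $ s = (if r = \<alpha> \<and> s = \<beta> then 1 else 0)" for r s unfolding E_def by simp
  have 1: "(\<Sum>j\<in>UNIV. E $ q $ j * (X $ p $ q * Y $ j $ p)) = (if q = \<alpha> then X $ p $ q * Y $ \<beta> $ p else 0)" for p q
  proof -
    have "(\<Sum>j\<in>UNIV. E $ q $ j * (X $ p $ q * Y $ j $ p)) = (\<Sum>j\<in>UNIV. if q = \<alpha> \<and> j = \<beta> then X $ p $ q * Y $ j $ p else 0)"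
      by (intro sum.cong) (auto simp: E)
    then show ?thesis by (simp only: L3)
  qed
  have 2: "(\<Sum>i\<in>UNIV. E $ i $ p * (X $ p $ q * Y $ q $ i)) = (if p = \<beta> then X $ p $ q * Y $ q $ \<alpha> else 0)" for p q
  proof -
    have "(\<Sum>i\<in>UNIV. E $ i $ p * (X $ p $ q * Y $ q $ i)) = (\<Sum>i\<in>UNIV. if i = \<alpha> \<and> p = \<beta> then X $ p $ q * Y $ q $ i else 0)"
      by (intro sum.cong) (auto simp: E)
    then show ?thesis by (simp only: L4)
  qed
  have 3: "(\<Sum>k\<in>UNIV. \<Sum>i\<in>UNIV. E $ i $ k * (u $ k * cnj (v $ i))) = u $ \<beta> * cnj (v $ \<alpha>)"
  proof -
    have "(\<Sum>k\<in>UNIV. \<Sum>i\<in>UNIV. E $ i $ k * (u $ k * cnj (v $ i))) = (\<Sum>k\<in>UNIV. \<Sum>i\<in>UNIV. if k = \<beta> \<and> i = \<alpha> then u $ k * cnj (v $ i) else 0)"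
      unfolding E by (intro sum.cong) auto
    also have "\<dots> = u $ \<beta> * cnj (v $ \<alpha>)" by (rule sum_delta2)
    finally show ?thesis .
  qed
  have "(\<Sum>a\<in>UNIV. \<Sum>c\<in>UNIV. tau_coeff E a c * (cot_pt X u Y v (Inl a) * cot_pt X u Y v (Inr c)))
     = (\<Sum>p\<in>UNIV. \<Sum>q\<in>UNIV. (if q = \<alpha> then X $ p $ q * Y $ \<beta> $ p else 0) - (if p = \<beta> then X $ p $ q * Y $ q $ \<alpha> else 0))
       + u $ \<beta> * cnj (v $ \<alpha>)"
    unfolding tau_split gl_part 1 2 3 ..
  also have "(\<Sum>p\<in>UNIV. \<Sum>q\<in>UNIV. (if q = \<alpha> then X $ p $ q * Y $ \<beta> $ p else 0) - (if p = \<beta> then X $ p $ q * Y $ q $ \<alpha> else 0))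
      = (\<Sum>p\<in>UNIV. X $ p $ \<alpha> * Y $ \<beta> $ p) - (\<Sum>q\<in>UNIV. X $ \<beta> $ q * Y $ q $ \<alpha>)"
    unfolding sum_subtractf by (simp add: sum.delta' L5)
  also have "\<dots> = (Y ** X) $ \<beta> $ \<alpha> - (X ** Y) $ \<beta> $ \<alpha>"
    by (simp add: matrix_matrix_mult_def mult.commute)
  finally show ?thesis .
qed


lemma Y_of_pt_g: "Y_of (pt_g X Y) = Y"
  by (simp add: Y_of_def pt_g_def Finite_Cartesian_Product.vec_eq_iff)

lemma ideal_vanish:
  assumes "f \<in> poly_ideal_gen S" "\<And>s. s \<in> S \<Longrightarrow> s p = 0"
  shows "f p = 0"
  using assms unfolding poly_ideal_gen_def by (auto intro!: sum.neutral)

theorem mainTheorem10: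
  fixes F :: "('n::finite \<times> 'n) diffop set"
  assumes "\<forall>P\<in>F. is_diffop P \<and> G_invariant P"
    and "HC_type F"
  shows "\<forall>X u Y v. cot_pt X u Y v \<in> char_var (left_ideal_gen (ext_g ` F \<union> range tau)) \<longrightarrow>
           nilpotent_mat Y \<and> mat_bracket X Y = (\<chi> i j. u $ i * cnj (v $ j))"
proof (intro allI impI)
  fix X Y :: "complex^'n^'n" and u v :: "complex^'n"
  assume pt: "cot_pt X u Y v \<in> char_var (left_ideal_gen (ext_g ` F \<union> range tau))"
  have Fz: "prin_sym P (pt_g X Y) = 0" if P: "P \<in> F" for P
  proof -
    have "prin_sym (ext_g P) (cot_pt X u Y v) = 0"
      by (rule char_var_gen[OF pt]) (use P assms(1) is_diffop_ext_g in auto)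
    then show ?thesis unfolding prin_sym_ext_g .
  qed
  have Tz: "prin_sym (tau Z) (cot_pt X u Y v) = 0" for Z :: "complex^'n^'n"
    by (rule char_var_gen[OF pt]) (auto simp: is_diffop_tau)
  have nil: "nilpotent_mat Y"
  proof (rule nilp_from_inv, rule ballI)
    fix q :: "complex^'n^'n \<Rightarrow> complex" assume q: "q \<in> inv_poly_plus"
    from assms(2) obtain k where HC: "\<forall>qs :: nat \<Rightarrow> complex^'n^'n \<Rightarrow> complex. (\<forall>i<k. qs i \<in> inv_poly_plus) \<longrightarrow>
        (\<lambda>p. \<Prod>i<k. qs i (Y_of p)) \<in> poly_ideal_gen (prin_sym ` F)"
      unfolding HC_type_def by blast
    have "(\<lambda>p. \<Prod>i<k. (\<lambda>_. q) i (Y_of p)) \<in> poly_ideal_gen (prin_sym ` F)"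
      using HC[rule_format, of "\<lambda>_. q"] q by simp
    then have "(\<lambda>p. \<Prod>i<k. (\<lambda>_. q) i (Y_of p)) (pt_g X Y) = 0"
      by (rule ideal_vanish) (use Fz in auto)
    then have "q Y ^ k = 0" by (simp add: Y_of_pt_g)
    then show "q Y = 0" by simp
  qed
  have br: "mat_bracket X Y $ b $ a = u $ b * cnj (v $ a)" for a b
  proof -
    have "prin_sym (tau (\<chi> r s. if r = a \<and> s = b then 1 else 0)) (cot_pt X u Y v) = 0" by (rule Tz)
    then have "(Y ** X) $ b $ a - (X ** Y) $ b $ a + u $ b * cnj (v $ a) = 0"
      unfolding prin_sym_tau tau_sum_E .
    then show ?thesis unfolding mat_bracket_def by (simp add: algebra_simps)
  qed
  show "nilpotent_mat Y \<and> mat_bracket X Y = (\<chi> i j. u $ i * cnj (v $ j))"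
    using nil br by (simp add: Finite_Cartesian_Product.vec_eq_iff)
qed

end
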